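(* Let $R$ be a principal ideal domain with field of fractions $F$, and let $Q\subseteq P$ be additive subgroups of $F$ containing $R$. If $P$ is an $R$-module and $\{p^mq\mid p\in P,\ q\in Q\}\subseteq Q$ for some positive integer $m$, then $P=Q$. Consequently, for every admissible pair $(\Lambda_l,\Lambda_s)=(Q,P)$ (of any type $\Phi\in\{B_l,C_l,F_4,G_2\}$) in $F$ with $R\subseteq Q$, one has $P=Q$ and $P$ is a subring of $F$.
   Context: Let $p=2$ for $\Phi=B_l,C_l,F_4$ and $p=3$ for $\Phi=G_2$. An admissible pair of type $\Phi$ in a ring $R$ is a pair $\Lambda=(\Lambda_l,\Lambda_s)$ of additive subgroups of $R$ with: (AP1) $p\Lambda_s\subseteq\Lambda_l\subseteq\Lambda_s$; (AP2) $t^p\Lambda_l\subseteq\Lambda_l$ for all $t\in\Lambda_s$; (AP3) $\Lambda_s$ is a subring if $\Phi\ne B_l$; (AP4) $\Lambda_l$ is a subring if $\Phi\ne C_l$; and moreover $\Lambda_l\Lambda_s\subseteq\Lambda_s$ (for $B_2=C_2$ neither need be a subring). *)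

theory Defs
  imports "HOL-Computational_Algebra.Fraction_Field"
begin

definition ideal_of :: "'a::comm_ring_1 set \<Rightarrow> bool" where
  "ideal_of I \<longleftrightarrow> 0 \<in> I \<and> (\<forall>x\<in>I. \<forall>y\<in>I. x + y \<in> I) \<and> (\<forall>x\<in>I. - x \<in> I)
      \<and> (\<forall>x\<in>I. \<forall>r. r * x \<in> I)"

definition is_PID :: "'a::idom itself \<Rightarrow> bool" where
  "is_PID _ \<longleftrightarrow> (\<forall>I::'a set. ideal_of I \<longrightarrow> (\<exists>a. I = {a * r | r. True}))"

definition emb :: "'a::idom \<Rightarrow> 'a fract" where
  "emb r = Fract r 1"

definition add_subgroup :: "'b::ab_group_add set \<Rightarrow> bool" where
  "add_subgroup A \<longleftrightarrow> 0 \<in> A \<and> (\<forall>x\<in>A. \<forall>y\<in>A. x + y \<in> A) \<and> (\<forall>x\<in>A. - x \<in> A)"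

definition subring_of :: "'b::ring set \<Rightarrow> bool" where
  "subring_of A \<longleftrightarrow> add_subgroup A \<and> (\<forall>x\<in>A. \<forall>y\<in>A. x * y \<in> A)"

(* doubly laced root system types; B l and C l for l >= 2; B 2 = C 2 *)
datatype root_type = TB nat | TC nat | TF4 | TG2

definition valid_type :: "root_type \<Rightarrow> bool" where
  "valid_type \<Phi> \<longleftrightarrow> (\<forall>l. \<Phi> = TB l \<longrightarrow> l \<ge> 2) \<and> (\<forall>l. \<Phi> = TC l \<longrightarrow> l \<ge> 2)"

definition is_typeB :: "root_type \<Rightarrow> bool" where
  "is_typeB \<Phi> \<longleftrightarrow> (\<exists>l. \<Phi> = TB l) \<or> \<Phi> = TC 2"

definition is_typeC :: "root_type \<Rightarrow> bool" where
  "is_typeC \<Phi> \<longleftrightarrow> (\<exists>l. \<Phi> = TC l) \<or> \<Phi> = TB 2"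

definition char_p :: "root_type \<Rightarrow> nat" where
  "char_p \<Phi> = (if \<Phi> = TG2 then 3 else 2)"

definition admissible_pair :: "root_type \<Rightarrow> 'b::comm_ring_1 set \<Rightarrow> 'b set \<Rightarrow> bool" where
  "admissible_pair \<Phi> Ll Ls \<longleftrightarrow>
     add_subgroup Ll \<and> add_subgroup Ls \<and>
     (\<forall>x\<in>Ls. of_nat (char_p \<Phi>) * x \<in> Ll) \<and> Ll \<subseteq> Ls \<and>
     (\<forall>t\<in>Ls. \<forall>x\<in>Ll. t ^ char_p \<Phi> * x \<in> Ll) \<and>
     (\<not> is_typeB \<Phi> \<longrightarrow> subring_of Ls) \<and>
     (\<not> is_typeC \<Phi> \<longrightarrow> subring_of Ll) \<and>
     (\<forall>x\<in>Ll. \<forall>y\<in>Ls. x * y \<in> Ls)"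

end

theory Submission
  imports Defs
begin

lemma Fract_pow: "(Fract (a::'a::idom) b) ^ n = Fract (a ^ n) (b ^ n)"
  by (induction n) (simp_all add: One_fract_def)

lemma part1:
  fixes R :: "'a::idom itself"
  assumes pid: "is_PID R"
    and Q: "add_subgroup Q" and P: "add_subgroup (P :: 'a fract set)" and QP: "Q \<subseteq> P"
    and RQ: "range emb \<subseteq> Q" and mod: "\<forall>r. \<forall>p\<in>P. emb r * p \<in> P"
    and m: "m > 0" and cl: "\<forall>p\<in>P. \<forall>q\<in>Q. p ^ m * q \<in> Q"
  shows "P = Q"
proof
  show "Q \<subseteq> P" by (rule QP)
  show "P \<subseteq> Q"
  proof
    fix p assume pP: "p \<in> P"
    obtain a b where pab: "p = Fract a b" and b0: "(b::'a) \<noteq> 0" by (cases p) auto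
    define I where "I = {x * a + y * b | x y. True}"
    have "ideal_of I"
      unfolding ideal_of_def I_def
    proof (intro conjI ballI allI)
      show "0 \<in> {x * a + y * b |x y. True}" by (rule CollectI, rule exI[of _ 0], rule exI[of _ 0]) simp
    next
      fix u v assume "u \<in> {x * a + y * b |x y. True}" "v \<in> {x * a + y * b |x y. True}"
      then obtain x1 y1 x2 y2 where "u = x1*a+y1*b" "v = x2*a+y2*b" by blast
      then show "u + v \<in> {x * a + y * b |x y. True}"
        by (intro CollectI exI[of _ "x1+x2"] exI[of _ "y1+y2"]) (simp add: algebra_simps)
    next
      fix u assume "u \<in> {x * a + y * b |x y. True}"
      then obtain x1 y1 where "u = x1*a+y1*b" by blast
      then show "- u \<in> {x * a + y * b |x y. True}"
        by (intro CollectI exI[of _ "-x1"] exI[of _ "-y1"]) (simp add: algebra_simps)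
    next
      fix u r assume "u \<in> {x * a + y * b |x y. True}"
      then obtain x1 y1 where "u = x1*a+y1*b" by blast
      then show "r * u \<in> {x * a + y * b |x y. True}"
        by (intro CollectI exI[of _ "r*x1"] exI[of _ "r*y1"]) (simp add: algebra_simps)
    qed
    with pid obtain d where Id: "I = {d * r | r. True}" unfolding is_PID_def by blast
    have "a \<in> I" unfolding I_def by (intro CollectI exI[of _ 1] exI[of _ 0]) simp
    then obtain a' where a': "a = d * a'" using Id by blast
    have "b \<in> I" unfolding I_def by (intro CollectI exI[of _ 0] exI[of _ 1]) simp
    then obtain b' where b': "b = d * b'" using Id by blast
    have "d \<in> I" using Id by (auto intro: exI[of _ 1])
    then obtain x y where dxy: "d = x * a + y * b" unfolding I_def by blast
    have d0: "d \<noteq> 0" and b'0: "b' \<noteq> 0" using b0 b' by auto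
    have "emb x * p + emb y = Fract d b"
      using b0 by (simp add: pab emb_def dxy eq_fract algebra_simps)
    moreover have "emb x * p \<in> P" using mod pP by blast
    moreover have "emb y \<in> P" using RQ QP by blast
    ultimately have dbP: "Fract d b \<in> P" using P unfolding add_subgroup_def by metis
    have "emb (a' * b' ^ (m - 1)) \<in> Q" using RQ by blast
    with cl dbP have "Fract d b ^ m * emb (a' * b' ^ (m - 1)) \<in> Q" by blast
    moreover have "Fract d b ^ m * emb (a' * b' ^ (m - 1)) = p"
    proof -
      have e: "b' ^ m = b' * b' ^ (m - 1)" using m by (cases m) auto
      have "Fract d b = Fract 1 b'" using b0 b'0 by (simp add: eq_fract b')
      then show ?thesis using b0 b'0
        by (simp add: Fract_pow emb_def pab eq_fract a' b' e algebra_simps)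
    qed
    ultimately show "p \<in> Q" by simp
  qed
qed

theorem proposition7p3:
  fixes R :: "'a::idom itself"
  assumes "is_PID R"
  shows "(\<forall>Q P :: 'a fract set.
            add_subgroup Q \<and> add_subgroup P \<and> Q \<subseteq> P \<and> range emb \<subseteq> Q \<and>
            (\<forall>r. \<forall>p\<in>P. emb r * p \<in> P) \<and>
            (\<exists>m::nat. m > 0 \<and> (\<forall>p\<in>P. \<forall>q\<in>Q. p ^ m * q \<in> Q))
          \<longrightarrow> P = Q)
       \<and> (\<forall>\<Phi> (Q :: 'a fract set) P.
            valid_type \<Phi> \<and> admissible_pair \<Phi> Q P \<and> range emb \<subseteq> Q
          \<longrightarrow> P = Q \<and> subring_of P)"
proof (rule conjI; intro allI impI)
  fix Q P :: "'a fract set"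
  assume "add_subgroup Q \<and> add_subgroup P \<and> Q \<subseteq> P \<and> range emb \<subseteq> Q \<and>
            (\<forall>r. \<forall>p\<in>P. emb r * p \<in> P) \<and>
            (\<exists>m::nat. m > 0 \<and> (\<forall>p\<in>P. \<forall>q\<in>Q. p ^ m * q \<in> Q))"
  then show "P = Q" using part1[OF assms] by blast
next
  fix \<Phi> and Q P :: "'a fract set"
  assume h: "valid_type \<Phi> \<and> admissible_pair \<Phi> Q P \<and> range emb \<subseteq> Q"
  then have ad: "admissible_pair \<Phi> Q P" and RQ: "range emb \<subseteq> Q" by auto
  have cp: "char_p \<Phi> > 0" by (simp add: char_p_def)
  have mod: "\<forall>r. \<forall>p\<in>P. emb r * p \<in> P" using ad RQ unfolding admissible_pair_def by blast
  have "P = Q"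
  proof (rule part1[OF assms])
    show "0 < char_p \<Phi>" by (rule cp)
  qed (use ad RQ mod in \<open>auto simp: admissible_pair_def\<close>)
  moreover have "subring_of P"
  proof -
    have "\<forall>x\<in>Q. \<forall>y\<in>P. x * y \<in> P" "add_subgroup P" using ad unfolding admissible_pair_def by auto
    then show ?thesis using \<open>P = Q\<close> unfolding subring_of_def by auto
  qed
  ultimately show "P = Q \<and> subring_of P" by blast
qed

end
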